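(* For any generic simple closed curve $\gamma$, the attraction diagram of $\gamma$ and the dual attraction diagram of $\gamma$ contain the same number of essential critical cycles.
   Context: $\gamma\colon S^1\to\mathbb{R}^2$ is a simple regular $C^3$ closed curve parametrized by arc length. A configuration is a pair $(x,y)\in S^1\times S^1$ (human at $\gamma(x)$, puppy at $\gamma(y)$); $D(x,y)=\|\gamma(x)-\gamma(y)\|$. A configuration is critical if $\frac{\partial}{\partial y}D(x,y)=0$ (the main diagonal $x=y$ consisting of critical configurations); critical configurations are stable ($\partial_y^2D>0$), unstable ($\partial_y^2D<0$) or pivot ($\partial_y^2D=0$, $\partial_y^3D\neq0$). Genericity means: finitely many critical configurations for each fixed $x$ and each fixed $y$; every critical configuration is of one of these types; finitely many pivot configurations; $\gamma$ meets its evolute transversely away from its cusps; and the critical set is a union of finitely many pairwise disjoint simple closed curves (critical cycles). The attraction diagram is the decomposition of the torus by the critical set; a critical cycle there is contractible if it bounds a simply connected subset of the torus and essential otherwise. Let $\ell(x,y)$ be the signed distance from $\gamma(x)$ to the directed tangent line to $\gamma$ at $\gamma(y)$ (direction $\gamma'(y)$), positive if $\gamma(x)$ lies to the left of it and negative if to the right. Let $L\colon S^1\times S^1\to S^1\times\mathbb{R}$, $L(x,y)=(y,\ell(x,y))$. The dual attraction diagram is the decomposition of the cylinder $S^1\times\mathbb{R}$ by the set $\{L(x,y): (x,y)\text{ critical}\}$; its critical cycles are the images under $L$ of the critical cycles of the attraction diagram, and such a cycle is essential if it is not contractible in the cylinder. *)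

theory Defs
  imports "HOL-Analysis.Analysis"
begin

text \<open>The curve is modelled as an L-periodic map gamma : real => complex (so S^1 = R / L Z,
 identified with the unit circle via t |-> cis (2 pi t / L)); the plane R^2 is identified with C.\<close>

definition dgam :: "(real \<Rightarrow> complex) \<Rightarrow> nat \<Rightarrow> real \<Rightarrow> complex" where
  "dgam \<gamma> k = ((\<lambda>f t. vector_derivative f (at t)) ^^ k) \<gamma>"

definition simple_closed_C3_arclength :: "real \<Rightarrow> (real \<Rightarrow> complex) \<Rightarrow> bool" where
  "simple_closed_C3_arclength L \<gamma> \<longleftrightarrow>
     L > 0 \<and> (\<forall>t. \<gamma> (t + L) = \<gamma> t) \<and> inj_on \<gamma> {0..<L} \<and>
     (\<forall>k<3. \<forall>t. (dgam \<gamma> k has_vector_derivative dgam \<gamma> (Suc k) t) (at t)) \<and>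
     continuous_on UNIV (dgam \<gamma> 3) \<and>
     (\<forall>t. norm (dgam \<gamma> 1 t) = 1)"

definition Dist :: "(real \<Rightarrow> complex) \<Rightarrow> real \<Rightarrow> real \<Rightarrow> real" where
  "Dist \<gamma> x y = norm (\<gamma> x - \<gamma> y)"

definition dyD :: "(real \<Rightarrow> complex) \<Rightarrow> nat \<Rightarrow> real \<Rightarrow> real \<Rightarrow> real" where
  "dyD \<gamma> k x y = (deriv ^^ k) (\<lambda>t. Dist \<gamma> x t) y"

definition same_point :: "real \<Rightarrow> real \<Rightarrow> real \<Rightarrow> bool" where
  "same_point L x y \<longleftrightarrow> (\<exists>k::int. y = x + of_int k * L)"

definition critical :: "real \<Rightarrow> (real \<Rightarrow> complex) \<Rightarrow> real \<Rightarrow> real \<Rightarrow> bool" where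
  "critical L \<gamma> x y \<longleftrightarrow> same_point L x y \<or> ((\<lambda>t. Dist \<gamma> x t) has_real_derivative 0) (at y)"

definition stable_conf where
  "stable_conf L \<gamma> x y \<longleftrightarrow> critical L \<gamma> x y \<and> dyD \<gamma> 2 x y > 0"
definition unstable_conf where
  "unstable_conf L \<gamma> x y \<longleftrightarrow> critical L \<gamma> x y \<and> dyD \<gamma> 2 x y < 0"
definition pivot_conf where
  "pivot_conf L \<gamma> x y \<longleftrightarrow> critical L \<gamma> x y \<and> dyD \<gamma> 2 x y = 0 \<and> dyD \<gamma> 3 x y \<noteq> 0"

text \<open>signed curvature, evolute (defined where the curvature is nonzero), its cusps are where
 the derivative of the curvature vanishes\<close>
definition curv :: "(real \<Rightarrow> complex) \<Rightarrow> real \<Rightarrow> real" where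
  "curv \<gamma> t = Im (cnj (dgam \<gamma> 1 t) * dgam \<gamma> 2 t)"
definition evolute :: "(real \<Rightarrow> complex) \<Rightarrow> real \<Rightarrow> complex" where
  "evolute \<gamma> t = \<gamma> t + (\<i> * dgam \<gamma> 1 t) / complex_of_real (curv \<gamma> t)"

definition meets_evolute_transversely :: "real \<Rightarrow> (real \<Rightarrow> complex) \<Rightarrow> bool" where
  "meets_evolute_transversely L \<gamma> \<longleftrightarrow>
     (\<forall>s t. curv \<gamma> t \<noteq> 0 \<and> deriv (curv \<gamma>) t \<noteq> 0 \<and> \<gamma> s = evolute \<gamma> t \<longrightarrow>
        Im (cnj (dgam \<gamma> 1 s) * vector_derivative (evolute \<gamma>) (at t)) \<noteq> 0)"

definition torus :: "(complex \<times> complex) set" where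
  "torus = sphere 0 1 \<times> sphere 0 1"
definition cylinder :: "(complex \<times> real) set" where
  "cylinder = sphere 0 1 \<times> UNIV"
definition circ :: "real \<Rightarrow> real \<Rightarrow> complex" where
  "circ L x = cis (2 * pi * x / L)"
definition Etor :: "real \<Rightarrow> real \<times> real \<Rightarrow> complex \<times> complex" where
  "Etor L p = (circ L (fst p), circ L (snd p))"

definition crit_set :: "real \<Rightarrow> (real \<Rightarrow> complex) \<Rightarrow> (complex \<times> complex) set" where
  "crit_set L \<gamma> = Etor L ` {(x, y). critical L \<gamma> x y}"

definition generic :: "real \<Rightarrow> (real \<Rightarrow> complex) \<Rightarrow> bool" where
  "generic L \<gamma> \<longleftrightarrow>
     (\<forall>x. finite {y \<in> {0..<L}. critical L \<gamma> x y}) \<and>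
     (\<forall>y. finite {x \<in> {0..<L}. critical L \<gamma> x y}) \<and>
     (\<forall>x y. critical L \<gamma> x y \<and> \<not> same_point L x y \<longrightarrow>
        stable_conf L \<gamma> x y \<or> unstable_conf L \<gamma> x y \<or> pivot_conf L \<gamma> x y) \<and>
     finite {(x, y). x \<in> {0..<L} \<and> y \<in> {0..<L} \<and> pivot_conf L \<gamma> x y} \<and>
     meets_evolute_transversely L \<gamma> \<and>
     (\<exists>\<C>. finite \<C> \<and> disjoint \<C> \<and> (\<forall>C\<in>\<C>. C homeomorphic (sphere (0::complex) 1)) \<and>
          \<Union>\<C> = crit_set L \<gamma>)"

definition crit_cycles :: "real \<Rightarrow> (real \<Rightarrow> complex) \<Rightarrow> (complex \<times> complex) set set" where
  "crit_cycles L \<gamma> = components (crit_set L \<gamma>)"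

text \<open>contractible = bounds a simply connected subset of the torus (a union of components of the
 complement, i.e. a relatively open set whose frontier is the cycle)\<close>
definition contractible_in_torus :: "(complex \<times> complex) set \<Rightarrow> bool" where
  "contractible_in_torus C \<longleftrightarrow>
     (\<exists>U. openin (top_of_set torus) U \<and> simply_connected U \<and> closure U - U = C)"

definition ell :: "(real \<Rightarrow> complex) \<Rightarrow> real \<Rightarrow> real \<Rightarrow> real" where
  "ell \<gamma> x y =
     (if Im (cnj (dgam \<gamma> 1 y) * (\<gamma> x - \<gamma> y)) \<ge> 0 then 1 else -1) *
     infdist (\<gamma> x) {\<gamma> y + of_real s * dgam \<gamma> 1 y | s. True}"

text \<open>L on the torus: (u,v) = (circ x, circ y) |-> (circ y, ell x y)\<close>
definition Ltor :: "real \<Rightarrow> (real \<Rightarrow> complex) \<Rightarrow> complex \<times> complex \<Rightarrow> complex \<times> real" where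
  "Ltor L \<gamma> z = (snd z, ell \<gamma> (SOME x. circ L x = fst z) (SOME y. circ L y = snd z))"

text \<open>the image under L of a critical cycle C (parametrised by a homeomorphism from the circle)
 is essential iff that loop is not null-homotopic in the cylinder\<close>
definition dual_essential :: "real \<Rightarrow> (real \<Rightarrow> complex) \<Rightarrow> (complex \<times> complex) set \<Rightarrow> bool" where
  "dual_essential L \<gamma> C \<longleftrightarrow>
     (\<exists>p q. homeomorphism (sphere (0::complex) 1) C p q \<and>
        \<not> (\<exists>c. homotopic_with_canon (\<lambda>_. True) (sphere 0 1) cylinder (Ltor L \<gamma> \<circ> p) (\<lambda>_. c)))"

end

theory Submission
  imports Defs "HOL-Complex_Analysis.Complex_Analysis" "HOL-Library.Real_Mod"
begin

lemma circle_sub_circle: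
  fixes S T :: "'a::t2_space set"
  assumes ST: "S \<subseteq> T" and hS: "S homeomorphic sphere (0::complex) 1"
    and hT: "T homeomorphic sphere (0::complex) 1"
  shows "S = T"
proof (rule ccontr)
  assume "S \<noteq> T"
  then obtain t where t: "t \<in> T" "t \<notin> S" using ST by blast
  obtain q q' where q: "homeomorphism T (sphere (0::complex) 1) q q'" using hT unfolding homeomorphic_def by blast
  obtain r' r where r0: "homeomorphism S (sphere (0::complex) 1) r' r" using hS unfolding homeomorphic_def by blast
  have r: "homeomorphism (sphere 0 1) S r r'" using homeomorphism_symD[OF r0] .
  have qT: "q ` T = sphere 0 1" using homeomorphism_image1[OF q] .
  have rS: "r ` sphere 0 1 = S" using homeomorphism_image1[OF r] .
  have contq: "continuous_on T q" using homeomorphism_cont1[OF q] .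
  have contr: "continuous_on (sphere 0 1) r" using homeomorphism_cont1[OF r] .
  have injq: "inj_on q T" by (rule inj_on_inverseI[of _ q']) (rule homeomorphism_apply1[OF q])
  have injr: "inj_on r (sphere 0 1)" by (rule inj_on_inverseI[of _ r']) (rule homeomorphism_apply1[OF r])
  define b where "b = q t"
  have b: "b \<in> sphere 0 1" using qT t unfolding b_def by blast
  define f where "f = q \<circ> r"
  have contf: "continuous_on (sphere 0 1) f"
    unfolding f_def
    by (rule continuous_on_compose[OF contr]) (rule continuous_on_subset[OF contq], simp add: rS ST)
  have injf: "inj_on f (sphere 0 1)"
    unfolding f_def
    by (rule comp_inj_on[OF injr]) (rule inj_on_subset[OF injq], simp add: rS ST)
  have fim: "f ` sphere 0 1 \<subseteq> sphere 0 1 - {b}"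
  proof
    fix y assume "y \<in> f ` sphere 0 1"
    then obtain z where z: "z \<in> sphere 0 1" "y = q (r z)" unfolding f_def by auto
    have rz: "r z \<in> S" using rS z by blast
    have "q (r z) \<noteq> q t"
    proof
      assume "q (r z) = q t"
      then have "r z = t" using injq rz ST t(1) unfolding inj_on_def by blast
      then show False using rz t by simp
    qed
    moreover have "q (r z) \<in> sphere 0 1" using qT rz ST by blast
    ultimately show "y \<in> sphere 0 1 - {b}" using z b_def by auto
  qed
  have "(sphere (0::complex) 1 - {b}) homeomorphic {x::complex. \<i> \<bullet> x = 0}"
    by (rule homeomorphic_punctured_sphere_hyperplane) (use b in auto)
  then obtain k k' where k: "homeomorphism (sphere (0::complex) 1 - {b}) {x::complex. \<i> \<bullet> x = 0} k k'"
    unfolding homeomorphic_def by blast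
  have kim: "k ` (sphere (0::complex) 1 - {b}) = {x::complex. \<i> \<bullet> x = 0}" using homeomorphism_image1[OF k] .
  have contk: "continuous_on (sphere (0::complex) 1 - {b}) k" using homeomorphism_cont1[OF k] .
  have injk: "inj_on k (sphere (0::complex) 1 - {b})"
    by (rule inj_on_inverseI[of _ k']) (rule homeomorphism_apply1[OF k])
  define F where "F = (\<lambda>z. Re (k (f z)))"
  have contF: "continuous_on (sphere 0 1) F"
    unfolding F_def
    by (intro continuous_intros continuous_on_compose2[OF contk contf fim])
  have injF: "inj_on F (sphere 0 1)"
  proof
    fix x y assume xy: "x \<in> sphere 0 1" "y \<in> sphere 0 1" "F x = F y"
    have fx: "f x \<in> sphere 0 1 - {b}" "f y \<in> sphere 0 1 - {b}" using fim xy by blast+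
    have kx: "\<i> \<bullet> k (f x) = 0" "\<i> \<bullet> k (f y) = 0" using kim fx by blast+
    have "k (f x) = k (f y)"
      using kx xy(3) unfolding F_def by (simp add: inner_complex_def complex_eq_iff)
    then have "f x = f y" using injk fx unfolding inj_on_def by blast
    then show "x = y" using injf xy unfolding inj_on_def by blast
  qed
  have "DIM(complex) \<le> DIM(real)"
    by (rule no_embedding_sphere_lowdim[OF contF injF]) simp
  then show False by simp
qed

lemma components_of_circles:
  fixes \<C> :: "('a::real_normed_vector) set set"
  assumes "finite \<C>" "disjoint \<C>" "\<forall>C\<in>\<C>. C homeomorphic sphere (0::complex) 1"
  shows "components (\<Union>\<C>) = \<C>"
proof -
  have cpt: "compact C" if "C \<in> \<C>" for C
    using homeomorphic_compactness[OF assms(3)[rule_format, OF that]] compact_sphere by blast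
  have conn: "connected C" if "C \<in> \<C>" for C
  proof -
    have "connected (sphere (0::complex) 1)" by (rule connected_sphere) simp
    then show ?thesis using homeomorphic_connectedness[OF assms(3)[rule_format, OF that]] by simp
  qed
  have ne: "C \<noteq> {}" if "C \<in> \<C>" for C
  proof
    assume "C = {}"
    then have "sphere (0::complex) 1 = {}" using assms(3) that by auto
    then show False by simp
  qed
  have comp: "C \<in> components (\<Union>\<C>)" if C: "C \<in> \<C>" for C
  proof -
    have "closed (\<Union>(\<C> - {C}))"
      using assms(1) cpt by (intro closed_Union) (auto intro: compact_imp_closed)
    have disj: "C \<inter> \<Union>(\<C> - {C}) = {}"
      using assms(2) C unfolding disjoint_def by blast
    show ?thesis
      unfolding in_components_maximal
    proof (intro conjI allI impI)
      show "C \<noteq> {}" "C \<subseteq> \<Union>\<C>" "connected C" using ne conn C by auto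
      fix D assume D: "D \<noteq> {} \<and> C \<subseteq> D \<and> D \<subseteq> \<Union>\<C> \<and> connected D"
      have cD: "connected D" using D by blast
      have "D \<subseteq> C"
      proof (rule ccontr)
        assume "\<not> D \<subseteq> C"
        define B where "B = \<Union>(\<C> - {C})"
        have f1: "B \<inter> D \<noteq> {}" using D \<open>\<not> D \<subseteq> C\<close> unfolding B_def by blast
        have f2: "C \<inter> D \<noteq> {}" using D ne C by blast
        have f3: "D \<subseteq> C \<union> B" using D unfolding B_def by blast
        have f4: "closed C" using cpt[OF C] compact_imp_closed by blast
        have f5: "closed B" using \<open>closed (\<Union>(\<C> - {C}))\<close> B_def by simp
        have f6: "C \<inter> B \<inter> D = {}" using disj B_def by blast
        have nc: "\<not> (\<exists>A B. closed A \<and> closed B \<and> D \<subseteq> A \<union> B \<and> A \<inter> B \<inter> D = {} \<and> A \<inter> D \<noteq> {} \<and> B \<inter> D \<noteq> {})"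
          using connected_closed[THEN iffD1, OF cD] .
        have "closed C \<and> closed B \<and> D \<subseteq> C \<union> B \<and> C \<inter> B \<inter> D = {} \<and> C \<inter> D \<noteq> {} \<and> B \<inter> D \<noteq> {}"
          using f1 f2 f3 f4 f5 f6 by simp
        then show False using nc by blast
      qed
      then show "D = C" using D by blast
    qed
  qed
  show ?thesis
  proof
    show "\<C> \<subseteq> components (\<Union>\<C>)" using comp by blast
    show "components (\<Union>\<C>) \<subseteq> \<C>"
    proof
      fix K assume K: "K \<in> components (\<Union>\<C>)"
      then obtain x where "x \<in> K" using in_components_nonempty by blast
      then obtain C where C: "C \<in> \<C>" "x \<in> C" using K in_components_subset by blast
      then have "C \<in> components (\<Union>\<C>)" using comp by blast
      moreover have "K \<inter> C \<noteq> {}" using C \<open>x \<in> K\<close> by blast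
      ultimately have "K = C" using components_eq[OF K] by simp
      then show "K \<in> \<C>" using C by simp
    qed
  qed
qed

lemma circ_sphere: "circ L x \<in> sphere 0 1"
  by (simp add: circ_def)

lemma circ_surj:
  assumes "L > 0" "u \<in> sphere (0::complex) 1"
  shows "\<exists>x. circ L x = u"
proof -
  have u0: "u \<noteq> 0" using assms(2) by auto
  have "sgn u = u" using assms(2) by (simp add: sgn_div_norm)
  then have "cis (Arg u) = u" using cis_Arg[OF u0] by simp
  moreover have "circ L (L * Arg u / (2 * pi)) = cis (Arg u)"
    using assms(1) by (simp add: circ_def)
  ultimately show ?thesis by metis
qed

lemma circ_eq:
  assumes "L > 0" "circ L x = circ L y"
  shows "\<exists>k::int. y = x + of_int k * L"
proof -
  have "cis (2 * pi * y / L - 2 * pi * x / L) = 1"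
    using assms(2) unfolding circ_def by (simp flip: cis_divide)
  then obtain n where n: "2 * pi * y / L - 2 * pi * x / L = of_int n * (2 * pi)"
    using cis_eq_1_iff by blast
  have "y - x = of_int n * L"
  proof -
    have "2 * pi * (y - x) = (of_int n * (2 * pi)) * L"
      using n assms(1) by (simp add: field_simps)
    then have "(2 * pi) * (y - x) = (2 * pi) * (of_int n * L)" by (simp add: algebra_simps)
    then show ?thesis using mult_left_cancel[of "2 * pi" "y - x" "of_int n * L"] by simp
  qed
  then show ?thesis by (intro exI[of _ n]) simp
qed

definition diagT :: "(complex \<times> complex) set" where
  "diagT = (\<lambda>z. (z, z)) ` sphere 0 1"

lemma Etor_torus: "Etor L p \<in> torus"
  by (simp add: Etor_def torus_def circ_def)

lemma crit_set_torus: "crit_set L \<gamma> \<subseteq> torus"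
  unfolding crit_set_def using Etor_torus by blast

lemma diagT_crit:
  assumes "L > 0"
  shows "diagT \<subseteq> crit_set L \<gamma>"
proof
  fix p assume "p \<in> diagT"
  then obtain u where u: "u \<in> sphere 0 1" "p = (u, u)" unfolding diagT_def by blast
  obtain x where x: "circ L x = u" using circ_surj[OF assms u(1)] by blast
  have "critical L \<gamma> x x" unfolding critical_def same_point_def by (intro disjI1 exI[of _ 0]) simp
  moreover have "Etor L (x, x) = p" using x u by (simp add: Etor_def)
  ultimately show "p \<in> crit_set L \<gamma>" unfolding crit_set_def by force
qed

lemma diagT_homeo: "homeomorphism (sphere 0 1) diagT (\<lambda>z. (z, z)) fst"
  unfolding diagT_def
  by (rule homeomorphismI) (auto intro!: continuous_intros)

lemma diagT_circle: "diagT homeomorphic sphere (0::complex) 1"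
  using diagT_homeo homeomorphic_def homeomorphic_sym by blast

lemma crit_struct:
  assumes L: "L > 0" and gen: "generic L \<gamma>"
  shows "\<forall>C\<in>crit_cycles L \<gamma>. C homeomorphic sphere (0::complex) 1"
    and "diagT \<in> crit_cycles L \<gamma>"
proof -
  obtain \<C> where C: "finite \<C>" "disjoint \<C>" "\<forall>C\<in>\<C>. C homeomorphic sphere (0::complex) 1"
      "\<Union>\<C> = crit_set L \<gamma>"
    using gen unfolding generic_def by blast
  have cc: "crit_cycles L \<gamma> = \<C>"
    unfolding crit_cycles_def using components_of_circles[OF C(1,2,3)] C(4) by simp
  then show circ: "\<forall>C\<in>crit_cycles L \<gamma>. C homeomorphic sphere (0::complex) 1" using C(3) by simp
  have one: "(1, 1) \<in> diagT" unfolding diagT_def by force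
  have sub: "diagT \<subseteq> crit_set L \<gamma>" using diagT_crit[OF L] .
  define K where "K = connected_component_set (crit_set L \<gamma>) (1, 1)"
  have K: "K \<in> crit_cycles L \<gamma>"
    unfolding crit_cycles_def components_iff K_def using one sub by blast
  have "connected diagT"
    using diagT_circle homeomorphic_connectedness connected_sphere[of "0::complex" 1]
    by (simp add: homeomorphic_connectedness)
  then have "diagT \<subseteq> K" unfolding K_def by (rule connected_component_maximal[OF one _ sub])
  then have "diagT = K" using circle_sub_circle diagT_circle circ K by blast
  then show "diagT \<in> crit_cycles L \<gamma>" using K by simp
qed

definition Aset :: "(complex \<times> complex) set" where
  "Aset = torus - diagT"

lemma Aset_iff: "p \<in> Aset \<longleftrightarrow> norm (fst p) = 1 \<and> norm (snd p) = 1 \<and> fst p \<noteq> snd p"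
  by (cases p) (auto simp: Aset_def torus_def diagT_def)

definition gmap :: "complex \<Rightarrow> complex \<times> complex" where
  "gmap z = (z / of_real (cmod z) * cis (4 * arctan (cmod z)), z / of_real (cmod z))"

definition hmap :: "complex \<times> complex \<Rightarrow> complex" where
  "hmap p = snd p * of_real (tan (Arg2pi (fst p / snd p) / 4))"

lemma arctan_pos: "0 < x \<Longrightarrow> 0 < arctan x"
  using arctan_monotone[of 0 x] by simp

lemma cis_ne_1: "0 < t \<Longrightarrow> t < 2 * pi \<Longrightarrow> cis t \<noteq> 1"
proof
  assume t: "0 < t" "t < 2 * pi" and c: "cis t = 1"
  then obtain n where n: "t = of_int n * (2 * pi)" using cis_eq_1_iff by blast
  then have "0 < of_int n * (2 * pi)" "of_int n * (2 * pi) < 1 * (2 * pi)" using t by auto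
  then have "0 < n" "n < 1" using pi_gt_zero
    by (simp_all add: zero_less_mult_iff mult_less_cancel_right)
  then show False by simp
qed

lemma Arg2pi_cis: "0 \<le> t \<Longrightarrow> t < 2 * pi \<Longrightarrow> Arg2pi (cis t) = t"
  by (rule Arg2pi_unique[of 1]) (simp_all add: cis_conv_exp mult.commute)

lemma gmap_A: "z \<noteq> 0 \<Longrightarrow> gmap z \<in> Aset"
proof -
  assume z: "z \<noteq> 0"
  have nz: "cmod (z / of_real (cmod z)) = 1" using z by (simp add: norm_divide)
  have a: "0 < 4 * arctan (cmod z)" "4 * arctan (cmod z) < 2 * pi"
    using arctan_pos[of "cmod z"] arctan_ubound[of "cmod z"] z by auto
  have "cis (4 * arctan (cmod z)) \<noteq> 1" using cis_ne_1[OF a] .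
  then have "z / of_real (cmod z) * cis (4 * arctan (cmod z)) \<noteq> z / of_real (cmod z)"
    using z by simp
  then show ?thesis using nz z by (simp add: Aset_iff gmap_def norm_mult norm_divide)
qed

lemma hmap_gmap: "z \<noteq> 0 \<Longrightarrow> hmap (gmap z) = z"
proof -
  assume z: "z \<noteq> 0"
  define v where "v = z / of_real (cmod z)"
  define a where "a = arctan (cmod z)"
  have v0: "v \<noteq> 0" using z by (simp add: v_def)
  have a: "0 \<le> 4 * a" "4 * a < 2 * pi"
    using arctan_pos[of "cmod z"] arctan_ubound[of "cmod z"] z by (auto simp: a_def)
  have "hmap (gmap z) = v * of_real (tan (Arg2pi (cis (4 * a)) / 4))"
    using v0 by (simp add: hmap_def gmap_def v_def[symmetric] a_def[symmetric])
  also have "\<dots> = v * of_real (cmod z)" using Arg2pi_cis[OF a] by (simp add: a_def tan_arctan)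
  also have "\<dots> = z" using z by (simp add: v_def)
  finally show ?thesis .
qed

lemma hmap_facts:
  assumes p: "p \<in> Aset"
  shows "0 < tan (Arg2pi (fst p / snd p) / 4)" "hmap p \<noteq> 0" "gmap (hmap p) = p"
    "cmod (hmap p) = tan (Arg2pi (fst p / snd p) / 4)"
    "0 < Arg2pi (fst p / snd p)"
proof -
  obtain u v where uv: "p = (u, v)" by (cases p)
  have u: "cmod u = 1" and v: "cmod v = 1" and uv': "u \<noteq> v" using p uv by (auto simp: Aset_iff)
  define w where "w = u / v"
  have w: "cmod w = 1" using u v by (simp add: w_def norm_divide)
  have w1: "w \<noteq> 1" using uv' v by (auto simp: w_def)
  define th where "th = Arg2pi w"
  have th: "0 \<le> th" "th < 2 * pi" "is_Arg w th" using Arg2pi[of w] by (auto simp: th_def)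
  have "th \<noteq> 0"
  proof
    assume "th = 0"
    then have "w \<in> \<real>" "0 \<le> Re w" using Arg2pi_eq_0[of w] by (auto simp: th_def)
    then have "w = of_real (Re w)" by (simp add: complex_is_Real_iff complex_eq_iff)
    then have "w = 1" using w \<open>0 \<le> Re w\<close> by (metis abs_of_nonneg norm_of_real of_real_1)
    then show False using w1 by simp
  qed
  then have th0: "0 < th" using th by simp
  then show "0 < Arg2pi (fst p / snd p)" by (simp add: uv th_def w_def)
  have cisw: "cis th = w" using th(3) w by (simp add: is_Arg_def cis_conv_exp)
  define t where "t = tan (th / 4)"
  have t: "0 < t" unfolding t_def by (rule tan_gt_zero) (use th0 th in auto)
  show "0 < tan (Arg2pi (fst p / snd p) / 4)" using t by (simp add: t_def th_def w_def uv)
  have hp: "hmap p = v * of_real t" by (simp add: hmap_def uv t_def th_def w_def)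
  show "hmap p \<noteq> 0" using hp t v by auto
  have nh: "cmod (hmap p) = t" using hp t v by (simp add: norm_mult)
  then show "cmod (hmap p) = tan (Arg2pi (fst p / snd p) / 4)" by (simp add: t_def th_def w_def uv)
  have at: "arctan t = th / 4" unfolding t_def by (rule arctan_tan) (use th0 th in auto)
  have "hmap p / of_real (cmod (hmap p)) = v" using hp nh t by simp
  moreover have "v * cis th = u" using cisw v by (auto simp: w_def)
  moreover have "4 * arctan t = th" using at by simp
  then have "cis (4 * arctan t) = cis th" by (rule arg_cong)
  ultimately show "gmap (hmap p) = p" unfolding gmap_def using nh uv by simp
qed

lemma hmap_sgn: "p \<in> Aset \<Longrightarrow> inverse (norm (hmap p - 0)) *\<^sub>R (hmap p - 0) = snd p"
proof -
  assume p: "p \<in> Aset"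
  have v: "snd p \<noteq> 0" using p by (auto simp: Aset_iff)
  have t: "0 < tan (Arg2pi (fst p / snd p) / 4)" using hmap_facts(1)[OF p] .
  have "norm (snd p) = 1" using p by (simp add: Aset_iff)
  then show ?thesis using hmap_facts(4)[OF p] t v by (simp add: hmap_def scaleR_conv_of_real field_simps)
qed

lemma continuous_on_gmap: "continuous_on (- {0}) gmap"
  unfolding gmap_def by (intro continuous_intros) auto

lemma continuous_on_hmap: "continuous_on Aset hmap"
proof (rule continuous_at_imp_continuous_on, intro ballI)
  fix p assume p: "p \<in> Aset"
  have v: "snd p \<noteq> 0" using p by (auto simp: Aset_iff)
  define w where "w = fst p / snd p"
  have w: "w \<notin> \<real>\<^sub>\<ge>\<^sub>0"
  proof
    assume "w \<in> \<real>\<^sub>\<ge>\<^sub>0"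
    then have "w \<in> \<real>" "0 \<le> Re w" by (auto simp: nonneg_Reals_def)
    then have "Arg2pi w = 0" using Arg2pi_eq_0 by blast
    then show False using hmap_facts(5)[OF p] by (simp add: w_def)
  qed
  have c1: "isCont (\<lambda>p. fst p / snd p) p" using v by (intro continuous_intros) auto
  have c2: "isCont Arg2pi (fst p / snd p)" using continuous_at_Arg2pi[OF w] by (simp add: w_def)
  have c3: "isCont (\<lambda>p. Arg2pi (fst p / snd p)) p"
    using continuous_at_compose[OF c1 c2] by (simp add: o_def)
  have th: "0 < Arg2pi (fst p / snd p)" "Arg2pi (fst p / snd p) < 2 * pi"
    using hmap_facts(5)[OF p] Arg2pi[of "fst p / snd p"] by auto
  have "cos (Arg2pi (fst p / snd p) / 4) \<noteq> 0"
    using cos_gt_zero_pi[of "Arg2pi (fst p / snd p) / 4"] th by auto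
  then have c4: "isCont tan (Arg2pi (fst p / snd p) / 4)" by (rule isCont_tan)
  have c3': "isCont (\<lambda>p. Arg2pi (fst p / snd p) / 4) p" using c3 by (intro continuous_intros) auto
  have c5: "isCont (\<lambda>p. tan (Arg2pi (fst p / snd p) / 4)) p"
    using isCont_o2[where f="\<lambda>p. Arg2pi (fst p / snd p) / 4" and g=tan, OF c3'] c4 by simp
  show "isCont hmap p" unfolding hmap_def by (intro continuous_intros c5)
qed

lemma homeo_gh: "homeomorphism (- {0}) Aset gmap hmap"
proof (rule homeomorphismI)
  show "continuous_on (- {0}) gmap" by (rule continuous_on_gmap)
  show "continuous_on Aset hmap" by (rule continuous_on_hmap)
  show "gmap ` (- {0}) \<subseteq> Aset" using gmap_A by blast
  show "hmap ` Aset \<subseteq> - {0}" using hmap_facts(2) by auto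
  show "\<And>x. x \<in> - {0} \<Longrightarrow> hmap (gmap x) = x" using hmap_gmap by auto
  show "\<And>y. y \<in> Aset \<Longrightarrow> gmap (hmap y) = y" using hmap_facts(3) by auto
qed

lemma gmap_ray: "0 < t \<Longrightarrow> t < 2 * pi \<Longrightarrow> gmap (of_real (tan (t / 4))) = (cis t, 1)"
proof -
  assume t: "0 < t" "t < 2 * pi"
  have tp: "0 < tan (t / 4)" by (rule tan_gt_zero) (use t in auto)
  have "arctan (tan (t / 4)) = t / 4" by (rule arctan_tan) (use t in auto)
  then have e: "4 * arctan (tan (t / 4)) = t" by simp
  have n: "cmod (complex_of_real (tan (t / 4))) = tan (t / 4)" using tp by simp
  have q: "complex_of_real (tan (t / 4)) / complex_of_real (tan (t / 4)) = 1" using tp by simp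
  show ?thesis unfolding gmap_def n e q by simp
qed

lemma compact_diagT: "compact diagT"
  unfolding diagT_def by (intro compact_continuous_image continuous_intros compact_sphere)

lemma compact_torus: "compact torus"
  unfolding torus_def by (intro compact_Times compact_sphere)

lemma openin_Aset: "openin (top_of_set torus) Aset"
proof -
  have "Aset = torus \<inter> (- diagT)" by (auto simp: Aset_def)
  moreover have "open (- diagT)" using compact_diagT by (simp add: compact_imp_closed open_Compl)
  ultimately show ?thesis using openin_open_Int by metis
qed

lemma Aset_torus: "Aset \<subseteq> torus" by (auto simp: Aset_def)

lemma connected_Aset: "connected Aset"
proof -
  have "connected (- {0::complex})" by (rule connected_punctured_universe) simp
  then have "connected (gmap ` (- {0}))" using continuous_on_gmap connected_continuous_image by blast
  moreover have "gmap ` (- {0}) = Aset" using homeomorphism_image1[OF homeo_gh] .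
  ultimately show ?thesis by simp
qed

lemma homeo_hg: "homeomorphism Aset (- {0}) hmap gmap"
  using homeomorphism_symD[OF homeo_gh] .

lemma jordan_setup:
  assumes CA: "C \<subseteq> Aset" and hC: "C homeomorphic sphere (0::complex) 1"
  shows "compact (hmap ` C)" "0 \<notin> hmap ` C" "gmap ` (hmap ` C) = C"
    "\<exists>c. simple_path c \<and> pathfinish c = pathstart c \<and> path_image c = hmap ` C"
proof -
  have hom: "homeomorphism C (hmap ` C) hmap gmap"
    by (rule homeomorphism_of_subsets[OF homeo_hg CA subset_refl refl])
  have cC: "compact C" using homeomorphic_compactness[OF hC] by simp
  show "compact (hmap ` C)"
    using compact_continuous_image[OF homeomorphism_cont1[OF hom] cC] .
  show "0 \<notin> hmap ` C"
  proof
    assume "0 \<in> hmap ` C"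
    then obtain p where p: "p \<in> C" "hmap p = 0" by auto
    then have "p \<in> Aset" using CA by blast
    then show False using hmap_facts(2) p(2) by simp
  qed
  show "gmap ` (hmap ` C) = C" using homeomorphism_image2[OF hom] .
  have "C homeomorphic hmap ` C" using hom unfolding homeomorphic_def by blast
  then have "hmap ` C homeomorphic C" by (rule homeomorphic_sym[THEN iffD1])
  then have "hmap ` C homeomorphic sphere (0::complex) 1" using hC by (rule homeomorphic_trans)
  then have "sphere (0::complex) 1 homeomorphic hmap ` C" by (rule homeomorphic_sym[THEN iffD1])
  then obtain q q' where q: "homeomorphism (sphere (0::complex) 1) (hmap ` C) q q'"
    unfolding homeomorphic_def by blast
  define c where "c = q \<circ> circlepath 0 1"
  have injq: "inj_on q (sphere 0 1)" by (rule inj_on_inverseI[of _ q']) (rule homeomorphism_apply1[OF q])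
  have sp0: "simple_path (circlepath (0::complex) 1)" by (simp add: simple_path_circlepath)
  have pi0: "path_image (circlepath (0::complex) 1) = sphere 0 1" by simp
  have "simple_path c" unfolding c_def
    by (rule simple_path_continuous_image[OF sp0]) (simp_all only: pi0 homeomorphism_cont1[OF q] injq)
  moreover have "pathfinish c = pathstart c" unfolding c_def
    by (simp add: pathfinish_compose pathstart_compose)
  moreover have "path_image c = hmap ` C" unfolding c_def
    using homeomorphism_image1[OF q] by (simp add: path_image_compose)
  ultimately show "\<exists>c. simple_path c \<and> pathfinish c = pathstart c \<and> path_image c = hmap ` C" by blast
qed

lemma jordan_J:
  assumes CA: "C \<subseteq> Aset" and hC: "C homeomorphic sphere (0::complex) 1"
  defines "J \<equiv> hmap ` C"
  shows "inside J \<noteq> {} \<and> open (inside J) \<and> connected (inside J) \<and>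
      outside J \<noteq> {} \<and> open (outside J) \<and> connected (outside J) \<and>
      bounded (inside J) \<and> \<not> bounded (outside J) \<and> inside J \<inter> outside J = {} \<and>
      inside J \<union> outside J = - J \<and> frontier (inside J) = J \<and> frontier (outside J) = J"
proof -
  obtain c where c: "simple_path c" "pathfinish c = pathstart c" "path_image c = J"
    using jordan_setup(4)[OF CA hC] unfolding J_def by blast
  show ?thesis using Jordan_inside_outside[OF c(1,2)] c(3) by simp
qed

lemma borsuk_J:
  assumes "compact J" "(0::complex) \<notin> J"
  shows "0 \<in> inside J \<longleftrightarrow>
    \<not> (\<exists>c. homotopic_with_canon (\<lambda>x. True) J (sphere 0 1)
              (\<lambda>x. inverse (norm (x - 0)) *\<^sub>R (x - 0)) (\<lambda>x. c))"
  using Borsuk_map_essential_bounded_component[OF assms] assms(2) by (simp add: inside_def)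

lemma far_outside:
  fixes J :: "complex set"
  assumes "bounded J"
  obtains B where "0 < B" "\<And>z. B \<le> norm z \<Longrightarrow> z \<in> outside J"
proof -
  obtain B where B: "0 < B" "J \<subseteq> ball 0 B" using bounded_subset_ballD[OF assms] by blast
  have conn: "connected (- ball (0::complex) B)"
    by (rule connected_complement_bounded_convex) auto
  have unb: "\<not> bounded (- ball (0::complex) B)"
  proof
    assume nb: "bounded (- ball (0::complex) B)"
    have "bounded (ball 0 B \<union> - ball (0::complex) B)"
      by (intro iffD2[OF bounded_Un] conjI bounded_ball nb)
    moreover have "ball 0 B \<union> - ball (0::complex) B = UNIV" by blast
    ultimately show False by simp
  qed
  have "z \<in> outside J" if z: "B \<le> norm z" for z
  proof -
    have zin: "z \<in> - ball 0 B" using z by simp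
    have sub: "- ball 0 B \<subseteq> - J" using B by blast
    have "- ball 0 B \<subseteq> connected_component_set (- J) z"
      by (rule connected_component_maximal[OF zin conn sub])
    then have "\<not> bounded (connected_component_set (- J) z)" using unb bounded_subset by blast
    moreover have "z \<notin> J" using sub zin by blast
    ultimately show ?thesis by (simp add: outside_def)
  qed
  then show ?thesis using that B(1) by blast
qed

lemma gmap_notin_C:
  assumes CA: "C \<subseteq> Aset" and z: "z \<noteq> 0" "z \<notin> hmap ` C"
  shows "gmap z \<in> torus - C"
proof -
  have gA: "gmap z \<in> Aset" using gmap_A[OF z(1)] .
  have "gmap z \<notin> C"
  proof
    assume "gmap z \<in> C"
    then have "hmap (gmap z) \<in> hmap ` C" by (rule imageI)
    then show False using hmap_gmap[OF z(1)] z(2) by simp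
  qed
  then show ?thesis using gA Aset_torus by blast
qed

lemma torus_minus_C:
  assumes CA: "C \<subseteq> Aset"
  shows "torus - C = diagT \<union> gmap ` (- {0} - hmap ` C)"
proof
  show "torus - C \<subseteq> diagT \<union> gmap ` (- {0} - hmap ` C)"
  proof
    fix x assume x: "x \<in> torus - C"
    show "x \<in> diagT \<union> gmap ` (- {0} - hmap ` C)"
    proof (cases "x \<in> diagT")
      case True then show ?thesis by simp
    next
      case False
      then have xA: "x \<in> Aset" using x by (simp add: Aset_def)
      have h0: "hmap x \<noteq> 0" using hmap_facts(2)[OF xA] .
      have "hmap x \<notin> hmap ` C"
      proof
        assume "hmap x \<in> hmap ` C"
        then obtain y where y: "y \<in> C" "hmap x = hmap y" by auto
        have "y \<in> Aset" using y(1) CA by blast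
        then have "gmap (hmap y) = y" by (rule hmap_facts(3))
        moreover have "gmap (hmap x) = x" using hmap_facts(3)[OF xA] .
        ultimately have "x = y" using y(2) by simp
        then show False using x y(1) by simp
      qed
      then have "hmap x \<in> - {0} - hmap ` C" using h0 by simp
      then have "gmap (hmap x) \<in> gmap ` (- {0} - hmap ` C)" by (rule imageI)
      then show ?thesis using hmap_facts(3)[OF xA] by simp
    qed
  qed
  show "diagT \<union> gmap ` (- {0} - hmap ` C) \<subseteq> torus - C"
  proof
    fix x assume x: "x \<in> diagT \<union> gmap ` (- {0} - hmap ` C)"
    show "x \<in> torus - C"
    proof (cases "x \<in> diagT")
      case True
      then have "x \<notin> Aset" by (simp add: Aset_def)
      then have "x \<notin> C" using CA by blast
      moreover have "x \<in> torus" using True by (auto simp: diagT_def torus_def)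
      ultimately show ?thesis by simp
    next
      case False
      then obtain z where z: "z \<in> - {0} - hmap ` C" "x = gmap z" using x by blast
      then show ?thesis using gmap_notin_C[OF CA] by simp
    qed
  qed
qed

lemma ray_connected: "connected ((\<lambda>t. (cis t, 1::complex)) ` {a..b})"
  by (intro connected_continuous_image continuous_intros) simp

lemma essential_connected:
  assumes CA: "C \<subseteq> Aset" and hC: "C homeomorphic sphere (0::complex) 1"
    and ins: "0 \<in> inside (hmap ` C)"
  shows "connected (torus - C)"
proof -
  define J where "J = hmap ` C"
  have JJ: "inside J \<noteq> {} \<and> open (inside J) \<and> connected (inside J) \<and>
      outside J \<noteq> {} \<and> open (outside J) \<and> connected (outside J) \<and>
      bounded (inside J) \<and> \<not> bounded (outside J) \<and> inside J \<inter> outside J = {} \<and>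
      inside J \<union> outside J = - J \<and> frontier (inside J) = J \<and> frontier (outside J) = J"
    using jordan_J[OF CA hC] unfolding J_def by blast
  have cJ: "compact J" unfolding J_def using jordan_setup(1)[OF CA hC] .
  have ins': "0 \<in> inside J" using ins J_def by simp
  have Io: "open (inside J)" using JJ by simp
  have Ic: "connected (inside J)" using JJ by simp
  have Oc: "connected (outside J)" using JJ by simp
  have IO: "inside J \<inter> outside J = {}" using JJ by simp
  have IOu: "inside J \<union> outside J = - J" using JJ by simp
  obtain e where e: "0 < e" "ball 0 e \<subseteq> inside J"
    using Io ins' unfolding open_contains_ball by blast
  obtain B where B: "0 < B" "\<And>z. B \<le> norm z \<Longrightarrow> z \<in> outside J"
    using far_outside[of J] cJ compact_imp_bounded by blast
  define I0 where "I0 = inside J - {0}"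
  have I0sub: "I0 \<subseteq> - {0} - J" using IOu unfolding I0_def by blast
  have O0: "0 \<notin> outside J" using IO ins' by blast
  have Osub: "outside J \<subseteq> - {0} - J" using IOu O0 by blast
  have split: "- {0} - J = I0 \<union> outside J" using IOu O0 unfolding I0_def by blast
  define P1 where "P1 = gmap ` I0"
  define P2 where "P2 = gmap ` outside J"
  have tc: "torus - C = diagT \<union> P1 \<union> P2"
    using torus_minus_C[OF CA] split unfolding P1_def P2_def J_def by auto
  have cI0: "connected I0" unfolding I0_def
    by (rule connected_open_delete[OF Io Ic]) simp
  have cP1: "connected P1" unfolding P1_def
    by (rule connected_continuous_image[OF continuous_on_subset[OF continuous_on_gmap] cI0])
       (use I0sub in blast)
  have cP2: "connected P2" unfolding P2_def
    by (rule connected_continuous_image[OF continuous_on_subset[OF continuous_on_gmap]])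
       (use Osub Oc in blast)+
  have cD: "connected diagT"
    using homeomorphic_connectedness[OF diagT_circle] connected_sphere[of "0::complex" 1] by simp
  define t1 where "t1 = 4 * arctan (e / 2)"
  define t2 where "t2 = 4 * arctan B"
  have t1: "0 < t1" "t1 < 2 * pi" using arctan_pos[of "e/2"] arctan_ubound[of "e/2"] e by (auto simp: t1_def)
  have t2: "0 < t2" "t2 < 2 * pi" using arctan_pos[of B] arctan_ubound[of B] B by (auto simp: t2_def)
  define R1 where "R1 = (\<lambda>t. (cis t, 1::complex)) ` {0..t1}"
  define R2 where "R2 = (\<lambda>t. (cis t, 1::complex)) ` {t2..2*pi}"
  have one: "(1, 1) \<in> diagT" unfolding diagT_def by force
  have oneR1: "(1, 1) \<in> R1" unfolding R1_def using t1 by (force intro: image_eqI[of _ _ 0])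
  have oneR2: "(1, 1) \<in> R2" unfolding R2_def using t2 by (force intro: image_eqI[of _ _ "2*pi"])
  have tan1: "tan (t1 / 4) = e / 2" by (simp add: t1_def tan_arctan)
  have tan2: "tan (t2 / 4) = B" by (simp add: t2_def tan_arctan)
  have ray: "(cis t, 1) = gmap (of_real (tan (t / 4)))" if "0 < t" "t < 2 * pi" for t
    using gmap_ray[OF that] by simp
  have tanpos: "0 < tan (t / 4)" if "0 < t" "t < 2 * pi" for t
    by (rule tan_gt_zero) (use that in auto)
  have R1sub: "R1 \<subseteq> diagT \<union> P1"
  proof
    fix x assume "x \<in> R1"
    then obtain t where t: "t \<in> {0..t1}" "x = (cis t, 1)" unfolding R1_def by blast
    show "x \<in> diagT \<union> P1"
    proof (cases "t = 0")
      case True then show ?thesis using t one by simp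
    next
      case False
      then have t0: "0 < t" "t < 2 * pi" using t t1 by auto
      have "tan (t / 4) \<le> tan (t1 / 4)"
      proof (rule ccontr)
        assume "\<not> tan (t / 4) \<le> tan (t1 / 4)"
        then have "arctan (tan (t1 / 4)) < arctan (tan (t / 4))" by (simp add: arctan_less_iff)
        moreover have "arctan (tan (t1 / 4)) = t1 / 4" by (rule arctan_tan) (use t1 in auto)
        moreover have "arctan (tan (t / 4)) = t / 4" by (rule arctan_tan) (use t0 in auto)
        ultimately show False using t by simp
      qed
      then have "norm (of_real (tan (t / 4)) :: complex) < e"
        using tan1 tanpos[OF t0] e by simp
      then have "of_real (tan (t / 4)) \<in> I0" using e tanpos[OF t0] unfolding I0_def by auto
      then show ?thesis using t ray[OF t0] unfolding P1_def by blast
    qed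
  qed
  have R2sub: "R2 \<subseteq> diagT \<union> P2"
  proof
    fix x assume "x \<in> R2"
    then obtain t where t: "t \<in> {t2..2*pi}" "x = (cis t, 1)" unfolding R2_def by blast
    show "x \<in> diagT \<union> P2"
    proof (cases "t = 2 * pi")
      case True then show ?thesis using t one by simp
    next
      case False
      then have t0: "0 < t" "t < 2 * pi" using t t2 by auto
      have "tan (t2 / 4) \<le> tan (t / 4)"
      proof (rule ccontr)
        assume "\<not> tan (t2 / 4) \<le> tan (t / 4)"
        then have "arctan (tan (t / 4)) < arctan (tan (t2 / 4))" by (simp add: arctan_less_iff)
        moreover have "arctan (tan (t2 / 4)) = t2 / 4" by (rule arctan_tan) (use t2 in auto)
        moreover have "arctan (tan (t / 4)) = t / 4" by (rule arctan_tan) (use t0 in auto)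
        ultimately show False using t by simp
      qed
      then have "B \<le> norm (of_real (tan (t / 4)) :: complex)"
        using tan2 tanpos[OF t0] by simp
      then have "of_real (tan (t / 4)) \<in> outside J" using B(2) by blast
      then show ?thesis using t ray[OF t0] unfolding P2_def by blast
    qed
  qed
  have p1: "(cis t1, 1) \<in> R1 \<inter> P1"
  proof -
    have "(cis t1, 1) \<in> R1" unfolding R1_def using t1 by auto
    moreover have "of_real (e / 2) \<in> I0" using e unfolding I0_def by auto
    then have "gmap (of_real (tan (t1 / 4))) \<in> P1" unfolding P1_def tan1 by blast
    ultimately show ?thesis using ray[OF t1] by simp
  qed
  have p2: "(cis t2, 1) \<in> R2 \<inter> P2"
  proof -
    have "(cis t2, 1) \<in> R2" unfolding R2_def using t2 by auto
    moreover have "of_real B \<in> outside J" using B by auto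
    then have "gmap (of_real (tan (t2 / 4))) \<in> P2" unfolding P2_def tan2 by blast
    ultimately show ?thesis using ray[OF t2] by simp
  qed
  have c1: "connected (diagT \<union> R1)"
    by (rule connected_Un[OF cD]) (use ray_connected one oneR1 R1_def in auto)
  have c2: "connected ((diagT \<union> R1) \<union> P1)"
    by (rule connected_Un[OF c1 cP1]) (use p1 in blast)
  have c3: "connected ((diagT \<union> R1 \<union> P1) \<union> R2)"
    by (rule connected_Un[OF c2]) (use ray_connected one oneR2 R2_def in auto)
  have c4: "connected ((diagT \<union> R1 \<union> P1 \<union> R2) \<union> P2)"
    by (rule connected_Un[OF c3 cP2]) (use p2 in blast)
  have "diagT \<union> R1 \<union> P1 \<union> R2 \<union> P2 = diagT \<union> P1 \<union> P2" using R1sub R2sub by blast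
  then show ?thesis using c4 tc by simp
qed

lemma null_contractible:
  assumes CA: "C \<subseteq> Aset" and hC: "C homeomorphic sphere (0::complex) 1"
    and nin: "0 \<notin> inside (hmap ` C)"
  shows "\<exists>U. openin (top_of_set torus) U \<and> simply_connected U \<and> closure U - U = C"
proof -
  define J where "J = hmap ` C"
  have JJ: "inside J \<noteq> {} \<and> open (inside J) \<and> connected (inside J) \<and>
      outside J \<noteq> {} \<and> open (outside J) \<and> connected (outside J) \<and>
      bounded (inside J) \<and> \<not> bounded (outside J) \<and> inside J \<inter> outside J = {} \<and>
      inside J \<union> outside J = - J \<and> frontier (inside J) = J \<and> frontier (outside J) = J"
    using jordan_J[OF CA hC] unfolding J_def by blast
  have J0: "0 \<notin> J" unfolding J_def using jordan_setup(2)[OF CA hC] .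
  have gJ: "gmap ` J = C" unfolding J_def using jordan_setup(3)[OF CA hC] .
  have nin': "0 \<notin> inside J" using nin J_def by simp
  have Io: "open (inside J)" using JJ by simp
  have Ic: "connected (inside J)" using JJ by simp
  have Ib: "bounded (inside J)" using JJ by simp
  have Oo: "open (outside J)" using JJ by simp
  have Oc: "connected (outside J)" using JJ by simp
  have IO: "inside J \<inter> outside J = {}" using JJ by simp
  have IOu: "inside J \<union> outside J = - J" using JJ by simp
  have Ifr: "frontier (inside J) = J" using JJ by simp
  have Ofr: "frontier (outside J) = J" using JJ by simp
  define I where "I = inside J"
  have IJ: "I \<inter> J = {}" using IOu unfolding I_def by blast
  have Isub: "I \<subseteq> - {0}" using nin' unfolding I_def by blast
  define U where "U = gmap ` I"
  have opI: "openin (top_of_set (- {0})) I"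
  proof -
    have "I = - {0} \<inter> I" using Isub by blast
    then show ?thesis using Io unfolding I_def by (metis openin_open_Int)
  qed
  have "openin (top_of_set Aset) U"
    unfolding U_def by (rule homeomorphism_imp_open_map[OF homeo_gh opI])
  then have opU: "openin (top_of_set torus) U" using openin_Aset by (rule openin_trans)
  have homI: "homeomorphism I U gmap hmap"
    unfolding U_def by (rule homeomorphism_of_subsets[OF homeo_gh Isub subset_refl refl])
  then have IU: "I homeomorphic U" unfolding homeomorphic_def by blast
  have compI: "- I = closure (outside J)"
  proof -
    have "closure (outside J) = outside J \<union> J" using Ofr by (simp add: closure_Un_frontier)
    also have "\<dots> = - I" using IOu IO IJ unfolding I_def by blast
    finally show ?thesis by simp
  qed
  have "connected (- I)" unfolding compI by (rule connected_imp_connected_closure[OF Oc])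
  then have "simply_connected I"
    using simply_connected_iff_simple[of I] Io Ib Ic unfolding I_def by simp
  then have scU: "simply_connected U" using homeomorphic_simply_connected_eq[OF IU] by simp
  have clI: "closure I = I \<union> J" using Ifr unfolding I_def by (simp add: closure_Un_frontier)
  have K0: "closure I \<subseteq> - {0}" using clI Isub J0 by blast
  have contK: "continuous_on (closure I) gmap" by (rule continuous_on_subset[OF continuous_on_gmap K0])
  have cK: "compact (closure I)" using Ib unfolding I_def by (simp add: compact_closure)
  have "compact (gmap ` closure I)" by (rule compact_continuous_image[OF contK cK])
  then have clgK: "closed (gmap ` closure I)" by (rule compact_imp_closed)
  have gK: "gmap ` closure I = U \<union> C" unfolding clI U_def using gJ by blast
  have "U \<subseteq> gmap ` closure I" unfolding U_def using closure_subset by blast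
  then have sub1: "closure U \<subseteq> U \<union> C" using closure_minimal[OF _ clgK] gK by blast
  have "gmap ` closure I \<subseteq> closure U"
    by (rule image_closure_subset[OF contK closed_closure]) (simp add: U_def closure_subset)
  then have sub2: "C \<subseteq> closure U" using gK by blast
  have disj: "U \<inter> C = {}"
  proof (rule ccontr)
    assume "U \<inter> C \<noteq> {}"
    then obtain x where x: "x \<in> I" "gmap x \<in> C" unfolding U_def by blast
    have "hmap (gmap x) = x" using hmap_gmap Isub x(1) by blast
    then have "x \<in> J" using x(2) unfolding J_def by (metis imageI)
    then show False using IJ x(1) by blast
  qed
  have "closure U - U = C" using sub1 sub2 disj by blast
  then show ?thesis using opU scU by blast
qed

lemma prod_top_eq: "prod_topology (top_of_set A) (top_of_set B) = top_of_set (A \<times> B)"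
  by (metis subtopology_Times prod_topology_euclidean)

lemma homotopic_canon_iff:
  "homotopic_with_canon P X Y p q \<longleftrightarrow>
     (\<exists>h. continuous_on ({0..1::real} \<times> X) h \<and> h \<in> ({0..1::real} \<times> X) \<rightarrow> Y \<and>
        (\<forall>x. h (0, x) = p x) \<and> (\<forall>x. h (1, x) = q x) \<and> (\<forall>t\<in>{0..1}. P (\<lambda>x. h (t, x))))"
  unfolding homotopic_with_def prod_top_eq continuous_map_subtopology_eu by simp

lemma homotopic_pair_const:
  assumes hf: "homotopic_with_canon (\<lambda>_. True) X (sphere (0::complex) 1) f (\<lambda>_. a)"
    and ce: "continuous_on X e"
  shows "homotopic_with_canon (\<lambda>_. True) X cylinder (\<lambda>x. (f x, e x)) (\<lambda>_. (a, 0))"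
proof -
  obtain H where H: "continuous_on ({0..1::real} \<times> X) H" "H \<in> ({0..1::real} \<times> X) \<rightarrow> sphere (0::complex) 1"
    "\<forall>x. H (0, x) = f x" "\<forall>x. H (1, x) = a"
    using hf unfolding homotopic_canon_iff by blast
  define K where "K = (\<lambda>p. (H p, (1 - fst p) * e (snd p)))"
  have c1: "continuous_on ({0..1} \<times> X) (\<lambda>p::real \<times> _. e (snd p))"
    by (rule continuous_on_compose2[OF ce continuous_on_snd]) auto
  have "continuous_on ({0..1} \<times> X) K"
    unfolding K_def by (intro continuous_intros H(1) c1)
  moreover have "K \<in> ({0..1} \<times> X) \<rightarrow> cylinder"
    using H(2) unfolding K_def cylinder_def by auto
  ultimately show ?thesis unfolding homotopic_canon_iff
    by (intro exI[of _ K]) (simp add: K_def H(3,4))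
qed

lemma not_contr:
  assumes conn: "connected (torus - C)" and Ct: "C \<subseteq> torus" and Cne: "C \<noteq> {}"
    and cl: "continuous_on (sphere (0::complex) 1) l" and lim: "l ` sphere (0::complex) 1 \<subseteq> torus - C"
    and ls: "\<And>z. z \<in> sphere (0::complex) 1 \<Longrightarrow> snd (l z) = z"
  shows "\<not> contractible_in_torus C"
proof
  assume "contractible_in_torus C"
  then obtain U where U: "openin (top_of_set torus) U" "simply_connected U" "closure U - U = C"
    unfolding contractible_in_torus_def by blast
  define T' where "T' = torus - C"
  have Ut: "U \<subseteq> torus" using openin_imp_subset[OF U(1)] .
  have UC: "U \<inter> C = {}" using U(3) by blast
  have UT: "U \<subseteq> T'" using Ut UC unfolding T'_def by blast
  have op: "openin (top_of_set T') U"
    by (rule openin_subset_trans[OF U(1) UT]) (simp add: T'_def)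
  have "U = T' \<inter> closure U"
  proof
    show "U \<subseteq> T' \<inter> closure U" using UT closure_subset by blast
    show "T' \<inter> closure U \<subseteq> U" using U(3) unfolding T'_def by blast
  qed
  then have clo: "closedin (top_of_set T') U" unfolding closedin_closed by blast
  have "U = {} \<or> U = T'" using conn op clo unfolding T'_def connected_clopen by blast
  moreover have "U \<noteq> {}" using U(3) Cne by auto
  ultimately have "U = T'" by simp
  then have "simply_connected T'" using U(2) by simp
  then obtain a where a: "homotopic_with_canon (\<lambda>h. True) (sphere (0::complex) 1) T' l (\<lambda>x. a)"
    using cl lim unfolding simply_connected_eq_contractible_circlemap T'_def by blast
  have "homotopic_with_canon (\<lambda>h. True) (sphere (0::complex) 1) (sphere (0::complex) 1) (snd \<circ> l) (snd \<circ> (\<lambda>x. a))"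
    by (rule homotopic_with_compose_continuous_left[OF a])
       (auto simp: T'_def torus_def intro: continuous_intros)
  then have "homotopic_with_canon (\<lambda>h. True) (sphere (0::complex) 1) (sphere (0::complex) 1) id (\<lambda>x. snd a)"
    by (rule homotopic_with_eq) (auto simp: ls)
  then have "contractible (sphere (0::complex) 1)" unfolding contractible_def by blast
  then show False by (simp add: contractible_sphere)
qed

lemma Ltor_fst: "fst (Ltor L \<gamma> z) = snd z"
  by (simp add: Ltor_def)

lemma dual_ess_of:
  assumes p: "homeomorphism (sphere (0::complex) 1) C p q"
    and ness: "\<not> (\<exists>c. homotopic_with_canon (\<lambda>_. True) (sphere (0::complex) 1) (sphere (0::complex) 1) (snd \<circ> p) (\<lambda>_. c))"
  shows "dual_essential L \<gamma> C"
  unfolding dual_essential_def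
proof (intro exI conjI)
  show "homeomorphism (sphere (0::complex) 1) C p q" by (rule p)
  show "\<not> (\<exists>c. homotopic_with_canon (\<lambda>_. True) (sphere (0::complex) 1) cylinder (Ltor L \<gamma> \<circ> p) (\<lambda>_. c))"
  proof
    assume "\<exists>c. homotopic_with_canon (\<lambda>_. True) (sphere (0::complex) 1) cylinder (Ltor L \<gamma> \<circ> p) (\<lambda>_. c)"
    then obtain c where c: "homotopic_with_canon (\<lambda>_. True) (sphere (0::complex) 1) cylinder (Ltor L \<gamma> \<circ> p) (\<lambda>_. c)"
      by blast
    have "homotopic_with_canon (\<lambda>_. True) (sphere (0::complex) 1) (sphere (0::complex) 1) (fst \<circ> (Ltor L \<gamma> \<circ> p)) (fst \<circ> (\<lambda>_. c))"
      by (rule homotopic_with_compose_continuous_left[OF c])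
         (auto simp: cylinder_def intro: continuous_intros)
    then have "homotopic_with_canon (\<lambda>_. True) (sphere (0::complex) 1) (sphere (0::complex) 1) (snd \<circ> p) (\<lambda>_. fst c)"
      by (rule homotopic_with_eq) (auto simp: Ltor_fst)
    then show False using ness by blast
  qed
qed

lemma not_dual_ess:
  assumes null: "\<And>p q. homeomorphism (sphere (0::complex) 1) C p q \<Longrightarrow>
      \<exists>c. homotopic_with_canon (\<lambda>_. True) (sphere (0::complex) 1) (sphere (0::complex) 1) (snd \<circ> p) (\<lambda>_. c)"
    and contE: "continuous_on C (\<lambda>z. snd (Ltor L \<gamma> z))"
  shows "\<not> dual_essential L \<gamma> C"
proof
  assume "dual_essential L \<gamma> C"
  then obtain p q where p: "homeomorphism (sphere (0::complex) 1) C p q"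
    and ne: "\<not> (\<exists>c. homotopic_with_canon (\<lambda>_. True) (sphere (0::complex) 1) cylinder (Ltor L \<gamma> \<circ> p) (\<lambda>_. c))"
    unfolding dual_essential_def by blast
  obtain c where c: "homotopic_with_canon (\<lambda>_. True) (sphere (0::complex) 1) (sphere (0::complex) 1) (snd \<circ> p) (\<lambda>_. c)"
    using null[OF p] by blast
  have ce: "continuous_on (sphere (0::complex) 1) (\<lambda>x. snd (Ltor L \<gamma> (p x)))"
    by (rule continuous_on_compose2[OF contE homeomorphism_cont1[OF p]])
       (use homeomorphism_image1[OF p] in blast)
  have "homotopic_with_canon (\<lambda>_. True) (sphere (0::complex) 1) cylinder
      (\<lambda>x. ((snd \<circ> p) x, snd (Ltor L \<gamma> (p x)))) (\<lambda>_. (c, 0))"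
    by (rule homotopic_pair_const[OF c ce])
  moreover have "(\<lambda>x. ((snd \<circ> p) x, snd (Ltor L \<gamma> (p x)))) = Ltor L \<gamma> \<circ> p"
    by (rule ext) (simp add: Ltor_def)
  ultimately show False using ne by auto
qed

lemma scc_facts:
  assumes "simple_closed_C3_arclength L \<gamma>"
  shows "L > 0" "\<And>t. \<gamma> (t + L) = \<gamma> t"
    "\<And>t. (\<gamma> has_vector_derivative dgam \<gamma> 1 t) (at t)"
    "\<And>t. (dgam \<gamma> 1 has_vector_derivative dgam \<gamma> 2 t) (at t)"
    "\<And>t. norm (dgam \<gamma> 1 t) = 1"
proof -
  note A = assms[unfolded simple_closed_C3_arclength_def]
  show "L > 0" "\<And>t. \<gamma> (t + L) = \<gamma> t" "\<And>t. norm (dgam \<gamma> 1 t) = 1" using A by auto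
  have d0: "dgam \<gamma> 0 = \<gamma>" by (simp add: dgam_def)
  show "\<And>t. (\<gamma> has_vector_derivative dgam \<gamma> 1 t) (at t)"
    using A d0 by (metis One_nat_def zero_less_numeral)
  show "\<And>t. (dgam \<gamma> 1 has_vector_derivative dgam \<gamma> 2 t) (at t)"
    using A by (metis Suc_1 one_less_numeral_iff semiring_norm(77))
qed

lemma periodic_int:
  fixes f :: "real \<Rightarrow> 'a"
  assumes per: "\<And>t. f (t + L) = f t"
  shows "f (t + of_int k * L) = f t"
proof -
  have pos: "f (t + real n * L) = f t" for n :: nat and t
  proof (induction n)
    case 0 show ?case by simp
  next
    case (Suc n)
    have "f (t + real (Suc n) * L) = f ((t + real n * L) + L)" by (simp add: algebra_simps)
    also have "\<dots> = f (t + real n * L)" by (rule per)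
    finally show ?case using Suc by simp
  qed
  show ?thesis
  proof (cases "k \<ge> 0")
    case True
    then have "k = int (nat k)" by simp
    then show ?thesis using pos[where n="nat k" and t=t] by (metis of_int_of_nat_eq)
  next
    case False
    define n where "n = nat (- k)"
    have n: "k = - int n" using False by (simp add: n_def)
    have "f (t + of_int k * L) = f ((t + of_int k * L) + real n * L)" using pos by simp
    also have "\<dots> = f t" using n by simp
    finally show ?thesis .
  qed
qed

lemma dgam1_periodic:
  assumes "simple_closed_C3_arclength L \<gamma>"
  shows "dgam \<gamma> 1 (t + L) = dgam \<gamma> 1 t"
proof -
  have d: "(\<gamma> has_vector_derivative dgam \<gamma> 1 (t + L)) (at (t + L))" using scc_facts(3)[OF assms] .
  have s: "((\<lambda>s. s + L) has_vector_derivative 1) (at t)"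
    by (auto intro!: derivative_eq_intros simp: has_real_derivative_iff_has_vector_derivative[symmetric])
  have "((\<gamma> \<circ> (\<lambda>s. s + L)) has_vector_derivative (1 *\<^sub>R dgam \<gamma> 1 (t + L))) (at t)"
    by (rule vector_diff_chain_at[OF s]) (use d in simp)
  moreover have "\<gamma> \<circ> (\<lambda>s. s + L) = \<gamma>" using scc_facts(2)[OF assms] by (simp add: o_def)
  ultimately have "(\<gamma> has_vector_derivative dgam \<gamma> 1 (t + L)) (at t)" by simp
  then show ?thesis using vector_derivative_unique_at scc_facts(3)[OF assms] by metis
qed

lemma infdist_line:
  fixes p a d :: complex
  assumes "norm d = 1"
  shows "infdist p {a + of_real s * d | s. True} = \<bar>Im (cnj d * (p - a))\<bar>"
proof -
  define w where "w = cnj d * (p - a)"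
  have dd: "cnj d * d = 1" using assms by (metis complex_norm_square mult.commute of_real_1 power_one)
  have dist_eq: "dist p (a + of_real s * d) = norm (w - of_real s)" for s
  proof -
    have "p - (a + of_real s * d) = d * (w - of_real s)"
      unfolding w_def using dd by (simp add: algebra_simps)
    then show ?thesis using assms by (simp add: dist_norm norm_mult)
  qed
  let ?S = "{a + of_real s * d | s. True}"
  have ne: "?S \<noteq> {}" by blast
  have "infdist p ?S \<le> \<bar>Im w\<bar>"
  proof (rule infdist_le2[of "a + of_real (Re w) * d"])
    show "a + of_real (Re w) * d \<in> ?S" by blast
    have "w - of_real (Re w) = \<i> * of_real (Im w)" by (simp add: complex_eq_iff)
    then show "dist p (a + of_real (Re w) * d) \<le> \<bar>Im w\<bar>" using dist_eq by (simp add: norm_mult)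
  qed
  moreover have "\<bar>Im w\<bar> \<le> infdist p ?S"
    unfolding infdist_notempty[OF ne]
  proof (rule cINF_greatest[OF ne])
    fix x assume "x \<in> ?S"
    then obtain s where x: "x = a + of_real s * d" by blast
    have "\<bar>Im (w - of_real s)\<bar> \<le> norm (w - of_real s)" by (rule abs_Im_le_cmod)
    then show "\<bar>Im w\<bar> \<le> dist p x" using dist_eq x by simp
  qed
  ultimately show ?thesis unfolding w_def by simp
qed

lemma ell_eq:
  assumes "simple_closed_C3_arclength L \<gamma>"
  shows "ell \<gamma> x y = Im (cnj (dgam \<gamma> 1 y) * (\<gamma> x - \<gamma> y))"
  unfolding ell_def infdist_line[OF scc_facts(5)[OF assms]] by simp

definition Fdist :: "(real \<Rightarrow> complex) \<Rightarrow> real \<Rightarrow> real \<Rightarrow> real" where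
  "Fdist \<gamma> x y = Im (cnj (dgam \<gamma> 1 y) * (\<gamma> x - \<gamma> y))"

lemma Fdist_periodic:
  assumes "simple_closed_C3_arclength L \<gamma>"
  shows "Fdist \<gamma> (x + of_int k * L) (y + of_int m * L) = Fdist \<gamma> x y"
proof -
  have g: "\<gamma> (t + of_int k * L) = \<gamma> t" for t k
    by (rule periodic_int) (rule scc_facts(2)[OF assms])
  have d: "dgam \<gamma> 1 (t + of_int k * L) = dgam \<gamma> 1 t" for t k
    by (rule periodic_int) (rule dgam1_periodic[OF assms])
  show ?thesis unfolding Fdist_def g d ..
qed

lemma circ_shift: "circ L (x + of_int k * L) = circ L x" if "L > 0"
proof -
  have "2 * pi * (x + of_int k * L) / L = 2 * pi * x / L + 2 * pi * of_int k"
    using that by (simp add: field_simps)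
  then have "circ L (x + of_int k * L) = cis (2 * pi * x / L + 2 * pi * of_int k)"
    unfolding circ_def by simp
  also have "\<dots> = cis (2 * pi * x / L) * cis (2 * pi * of_int k)" by (simp only: cis_mult)
  also have "cis (2 * pi * of_int k) = 1" by (rule cis_multiple_2pi) simp
  finally show ?thesis by (simp add: circ_def)
qed

lemma E_Etor:
  assumes "simple_closed_C3_arclength L \<gamma>"
  shows "snd (Ltor L \<gamma> (Etor L (x, y))) = Fdist \<gamma> x y"
proof -
  have L: "L > 0" using scc_facts(1)[OF assms] .
  define x' where "x' = (SOME x'. circ L x' = circ L x)"
  define y' where "y' = (SOME y'. circ L y' = circ L y)"
  have "circ L x' = circ L x" unfolding x'_def by (rule someI) (rule refl)
  then obtain k :: int where k: "x = x' + of_int k * L" using circ_eq[OF L] by metis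
  have "circ L y' = circ L y" unfolding y'_def by (rule someI) (rule refl)
  then obtain m :: int where m: "y = y' + of_int m * L" using circ_eq[OF L] by metis
  have "snd (Ltor L \<gamma> (Etor L (x, y))) = ell \<gamma> x' y'"
    by (simp add: Ltor_def Etor_def x'_def y'_def)
  also have "\<dots> = Fdist \<gamma> x' y'" using ell_eq[OF assms] by (simp add: Fdist_def)
  also have "\<dots> = Fdist \<gamma> x y" using Fdist_periodic[OF assms, of x' k y' m] k m by simp
  finally show ?thesis .
qed

lemma continuous_Fdist:
  assumes "simple_closed_C3_arclength L \<gamma>"
  shows "continuous_on UNIV (\<lambda>p. Fdist \<gamma> (fst p) (snd p))"
proof -
  have cg: "continuous_on UNIV \<gamma>"
    by (rule continuous_at_imp_continuous_on)
       (use has_vector_derivative_continuous scc_facts(3)[OF assms] in blast)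
  have cd: "continuous_on UNIV (dgam \<gamma> 1)"
    by (rule continuous_at_imp_continuous_on)
       (use has_vector_derivative_continuous scc_facts(4)[OF assms] in blast)
  have c1: "continuous_on UNIV (\<lambda>p::real\<times>real. \<gamma> (fst p))"
    by (rule continuous_on_compose2[OF cg continuous_on_fst]) auto
  have c2: "continuous_on UNIV (\<lambda>p::real\<times>real. \<gamma> (snd p))"
    by (rule continuous_on_compose2[OF cg continuous_on_snd]) auto
  have c3: "continuous_on UNIV (\<lambda>p::real\<times>real. dgam \<gamma> 1 (snd p))"
    by (rule continuous_on_compose2[OF cd continuous_on_snd]) auto
  show ?thesis unfolding Fdist_def by (intro continuous_intros c1 c2 c3)
qed

lemma circ_rep:
  assumes L: "L > 0" and u: "u \<in> sphere (0::complex) 1"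
  shows "\<exists>x\<in>{0..L}. circ L x = u"
proof -
  obtain x where x: "circ L x = u" using circ_surj[OF L u] by blast
  define x' where "x' = x + of_int (- \<lfloor>x / L\<rfloor>) * L"
  have "circ L x' = u" unfolding x'_def using circ_shift[OF L, of x "- \<lfloor>x / L\<rfloor>"] x by simp
  moreover have "0 \<le> x'" "x' \<le> L"
  proof -
    have f1: "of_int \<lfloor>x / L\<rfloor> \<le> x / L" by (rule of_int_floor_le)
    have f2: "x / L < of_int \<lfloor>x / L\<rfloor> + 1" by (rule real_of_int_floor_add_one_gt)
    have "of_int \<lfloor>x / L\<rfloor> * L \<le> (x / L) * L" by (rule mult_right_mono[OF f1]) (use L in simp)
    then have "of_int \<lfloor>x / L\<rfloor> * L \<le> x" using L by simp
    then show "0 \<le> x'" unfolding x'_def by simp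
    have "(x / L) * L < (of_int \<lfloor>x / L\<rfloor> + 1) * L" by (rule mult_strict_right_mono[OF f2 L])
    then have "x < (of_int \<lfloor>x / L\<rfloor> + 1) * L" using L by simp
    then show "x' \<le> L" unfolding x'_def by (simp add: algebra_simps)
  qed
  ultimately show ?thesis by auto
qed

lemma continuous_E:
  assumes scc: "simple_closed_C3_arclength L \<gamma>"
  shows "continuous_on torus (\<lambda>z. snd (Ltor L \<gamma> z))"
proof -
  have L: "L > 0" using scc_facts(1)[OF scc] .
  define D where "D = {0..L} \<times> {0..L}"
  have contEt: "continuous_on D (Etor L)"
    unfolding Etor_def circ_def using L by (intro continuous_intros) auto
  have imEt: "Etor L ` D = torus"
  proof
    show "Etor L ` D \<subseteq> torus" using Etor_torus by blast
    show "torus \<subseteq> Etor L ` D"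
    proof
      fix z assume "z \<in> torus"
      then have z: "fst z \<in> sphere 0 1" "snd z \<in> sphere 0 1" by (auto simp: torus_def)
      obtain x where x: "x \<in> {0..L}" "circ L x = fst z" using circ_rep[OF L z(1)] by blast
      obtain y where y: "y \<in> {0..L}" "circ L y = snd z" using circ_rep[OF L z(2)] by blast
      have "Etor L (x, y) = z" using x y by (simp add: Etor_def)
      moreover have "(x, y) \<in> D" using x y by (simp add: D_def)
      ultimately show "z \<in> Etor L ` D" by blast
    qed
  qed
  have q: "quotient_map (top_of_set D) (top_of_set torus) (Etor L)"
  proof (rule continuous_imp_quotient_map)
    show "continuous_map (top_of_set D) (top_of_set torus) (Etor L)"
      using contEt imEt by (auto simp: continuous_map_subtopology_eu)
    show "compact_space (top_of_set D)"
      by (rule compact_space_subtopology) (simp add: D_def compact_Times)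
    show "Hausdorff_space (top_of_set torus)"
      by (rule Hausdorff_space_subtopology) simp
    show "Etor L ` topspace (top_of_set D) = topspace (top_of_set torus)" using imEt by simp
  qed
  have "continuous_on D (\<lambda>p. Fdist \<gamma> (fst p) (snd p))"
    using continuous_on_subset[OF continuous_Fdist[OF scc]] by blast
  then have "continuous_on D ((\<lambda>z. snd (Ltor L \<gamma> z)) \<circ> Etor L)"
    by (rule continuous_on_eq) (auto simp: E_Etor[OF scc])
  then have "continuous_map (top_of_set D) euclidean ((\<lambda>z. snd (Ltor L \<gamma> z)) \<circ> Etor L)" by simp
  then have "continuous_map (top_of_set torus) euclidean (\<lambda>z. snd (Ltor L \<gamma> z))"
    by (rule continuous_compose_quotient_map[OF q])
  then show ?thesis by simp
qed

lemma not_contr_diag: "\<not> contractible_in_torus diagT"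
proof (rule not_contr[where l="\<lambda>z. (- z, z)"])
  have "torus - diagT = Aset" by (simp add: Aset_def)
  then show "connected (torus - diagT)" using connected_Aset by simp
  show "diagT \<subseteq> torus" by (auto simp: diagT_def torus_def)
  show "diagT \<noteq> {}" unfolding diagT_def by auto
  show "continuous_on (sphere (0::complex) 1) (\<lambda>z. (- z, z))" by (intro continuous_intros)
  show "(\<lambda>z. (- z, z)) ` sphere (0::complex) 1 \<subseteq> torus - diagT"
  proof
    fix w assume "w \<in> (\<lambda>z. (- z, z)) ` sphere (0::complex) 1"
    then obtain z where z: "z \<in> sphere (0::complex) 1" "w = (- z, z)" by blast
    have "z \<noteq> 0" using z by auto
    then have "- z \<noteq> z" by (auto simp: complex_eq_iff)
    then have "w \<in> Aset" using z by (simp add: Aset_iff)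
    then show "w \<in> torus - diagT" by (simp add: Aset_def)
  qed
  show "\<And>z. z \<in> sphere (0::complex) 1 \<Longrightarrow> snd (- z, z) = z" by simp
qed

lemma id_not_null:
  "\<not> (\<exists>c. homotopic_with_canon (\<lambda>_. True) (sphere (0::complex) 1) (sphere (0::complex) 1) id (\<lambda>_. c))"
proof
  assume "\<exists>c. homotopic_with_canon (\<lambda>_. True) (sphere (0::complex) 1) (sphere (0::complex) 1) id (\<lambda>_. c)"
  then have "contractible (sphere (0::complex) 1)" unfolding contractible_def by blast
  then show False by (simp add: contractible_sphere)
qed

lemma dual_diag: "dual_essential L \<gamma> diagT"
proof (rule dual_ess_of[OF diagT_homeo])
  have "snd \<circ> (\<lambda>z::complex. (z, z)) = id" by (rule ext) simp
  then show "\<not> (\<exists>c. homotopic_with_canon (\<lambda>_. True) (sphere (0::complex) 1) (sphere (0::complex) 1)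
      (snd \<circ> (\<lambda>z. (z, z))) (\<lambda>_. c))" using id_not_null by simp
qed

lemma key:
  assumes scc: "simple_closed_C3_arclength L \<gamma>" and gen: "generic L \<gamma>"
    and C: "C \<in> crit_cycles L \<gamma>"
  shows "\<not> contractible_in_torus C \<longleftrightarrow> dual_essential L \<gamma> C"
proof (cases "C = diagT")
  case True
  then show ?thesis using not_contr_diag dual_diag by simp
next
  case False
  have L: "L > 0" using scc_facts(1)[OF scc] .
  have hC: "C homeomorphic sphere (0::complex) 1" using crit_struct(1)[OF L gen] C by blast
  have D: "diagT \<in> crit_cycles L \<gamma>" using crit_struct(2)[OF L gen] .
  have CD: "C \<inter> diagT = {}"
    using components_nonoverlap[of C "crit_set L \<gamma>" diagT] C D False unfolding crit_cycles_def by blast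
  have Ct: "C \<subseteq> torus"
    using C crit_set_torus in_components_subset unfolding crit_cycles_def by blast
  have CA: "C \<subseteq> Aset" using Ct CD by (auto simp: Aset_def)
  have Cne: "C \<noteq> {}"
  proof
    assume "C = {}"
    then have "sphere (0::complex) 1 = {}" using hC by simp
    then show False by simp
  qed
  define J where "J = hmap ` C"
  have cJ: "compact J" unfolding J_def by (rule jordan_setup(1)[OF CA hC])
  have J0: "0 \<notin> J" unfolding J_def by (rule jordan_setup(2)[OF CA hC])
  have gJ: "gmap ` J = C" unfolding J_def by (rule jordan_setup(3)[OF CA hC])
  have J0': "J \<subseteq> - {0}" using J0 by blast
  define beta where "beta = (\<lambda>x::complex. inverse (norm (x - 0)) *\<^sub>R (x - 0))"
  have beta: "beta x = snd (gmap x)" if "x \<in> J" for x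
  proof -
    have x0: "x \<noteq> 0" using that J0 by blast
    have "gmap x \<in> C" using gJ that by blast
    then have ga: "gmap x \<in> Aset" using CA by blast
    have "beta (hmap (gmap x)) = snd (gmap x)" unfolding beta_def by (rule hmap_sgn[OF ga])
    then show ?thesis using hmap_gmap[OF x0] by simp
  qed
  have bor: "0 \<in> inside J \<longleftrightarrow> \<not> (\<exists>c. homotopic_with_canon (\<lambda>x. True) J (sphere 0 1) beta (\<lambda>x. c))"
    unfolding beta_def by (rule borsuk_J[OF cJ J0])
  show ?thesis
  proof (cases "0 \<in> inside J")
    case True
    have nc: "\<not> contractible_in_torus C"
    proof (rule not_contr[where l="\<lambda>z. (z, z)"])
      show "connected (torus - C)" using essential_connected[OF CA hC] True J_def by simp
      show "C \<subseteq> torus" by (rule Ct)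
      show "C \<noteq> {}" by (rule Cne)
      show "continuous_on (sphere (0::complex) 1) (\<lambda>z. (z, z))" by (intro continuous_intros)
      show "(\<lambda>z. (z, z)) ` sphere (0::complex) 1 \<subseteq> torus - C"
        using CD by (auto simp: diagT_def torus_def)
      show "\<And>z. z \<in> sphere (0::complex) 1 \<Longrightarrow> snd (z, z) = z" by simp
    qed
    obtain p q where pq: "homeomorphism (sphere (0::complex) 1) C p q"
      using hC homeomorphic_sym[THEN iffD1, OF hC] unfolding homeomorphic_def by blast
    have de: "dual_essential L \<gamma> C"
    proof (rule dual_ess_of[OF pq])
      show "\<not> (\<exists>c. homotopic_with_canon (\<lambda>_. True) (sphere (0::complex) 1) (sphere (0::complex) 1) (snd \<circ> p) (\<lambda>_. c))"
      proof
        assume "\<exists>c. homotopic_with_canon (\<lambda>_. True) (sphere (0::complex) 1) (sphere (0::complex) 1) (snd \<circ> p) (\<lambda>_. c)"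
        then obtain c where c: "homotopic_with_canon (\<lambda>_. True) (sphere (0::complex) 1) (sphere (0::complex) 1) (snd \<circ> p) (\<lambda>_. c)"
          by blast
        define r where "r = q \<circ> gmap"
        have cr: "continuous_on J r" unfolding r_def
          by (rule continuous_on_compose[OF continuous_on_subset[OF continuous_on_gmap J0']])
             (simp add: gJ homeomorphism_cont2[OF pq])
        have rim: "r \<in> J \<rightarrow> sphere 0 1"
          using homeomorphism_image2[OF pq] gJ unfolding r_def by auto
        have "homotopic_with_canon (\<lambda>_. True) J (sphere (0::complex) 1) ((snd \<circ> p) \<circ> r) ((\<lambda>_. c) \<circ> r)"
          by (rule homotopic_with_compose_continuous_right[OF c cr rim])
        then have "homotopic_with_canon (\<lambda>x. True) J (sphere 0 1) beta (\<lambda>x. c)"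
        proof (rule homotopic_with_eq)
          fix x assume "x \<in> topspace (top_of_set J)"
          then have x: "x \<in> J" by simp
          have "gmap x \<in> C" using gJ x by blast
          then have "p (q (gmap x)) = gmap x" by (rule homeomorphism_apply2[OF pq])
          then show "beta x = ((snd \<circ> p) \<circ> r) x" using beta[OF x] by (simp add: r_def)
        qed auto
        then show False using bor True by blast
      qed
    qed
    show ?thesis using nc de by simp
  next
    case False
    have co: "contractible_in_torus C"
      unfolding contractible_in_torus_def using null_contractible[OF CA hC] False J_def by simp
    obtain c where c: "homotopic_with_canon (\<lambda>x. True) J (sphere 0 1) beta (\<lambda>x. c)"
      using bor False by blast
    have nde: "\<not> dual_essential L \<gamma> C"
    proof (rule not_dual_ess)
      show "continuous_on C (\<lambda>z. snd (Ltor L \<gamma> z))"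
        by (rule continuous_on_subset[OF continuous_E[OF scc] Ct])
      fix p q assume pq: "homeomorphism (sphere (0::complex) 1) C p q"
      define r where "r = hmap \<circ> p"
      have cr: "continuous_on (sphere 0 1) r" unfolding r_def
        by (rule continuous_on_compose[OF homeomorphism_cont1[OF pq]])
           (simp add: homeomorphism_image1[OF pq] continuous_on_subset[OF continuous_on_hmap CA])
      have rim: "r \<in> sphere 0 1 \<rightarrow> J"
        using homeomorphism_image1[OF pq] unfolding r_def J_def by auto
      have "homotopic_with_canon (\<lambda>_. True) (sphere (0::complex) 1) (sphere (0::complex) 1) (beta \<circ> r) ((\<lambda>x. c) \<circ> r)"
        by (rule homotopic_with_compose_continuous_right[OF c cr rim])
      then have "homotopic_with_canon (\<lambda>_. True) (sphere (0::complex) 1) (sphere (0::complex) 1) (snd \<circ> p) (\<lambda>_. c)"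
      proof (rule homotopic_with_eq)
        fix x assume "x \<in> topspace (top_of_set (sphere (0::complex) 1))"
        then have x: "x \<in> sphere (0::complex) 1" by simp
        have "p x \<in> C" using homeomorphism_image1[OF pq] x by blast
        then have pa: "p x \<in> Aset" using CA by blast
        show "(snd \<circ> p) x = (beta \<circ> r) x"
          using hmap_sgn[OF pa] by (simp add: r_def beta_def)
      qed auto
      then show "\<exists>c. homotopic_with_canon (\<lambda>_. True) (sphere (0::complex) 1) (sphere (0::complex) 1) (snd \<circ> p) (\<lambda>_. c)"
        by blast
    qed
    show ?thesis using co nde by simp
  qed
qed

theorem lemma4:
  fixes L :: real and \<gamma> :: "real \<Rightarrow> complex"
  assumes "simple_closed_C3_arclength L \<gamma>"
    and "generic L \<gamma>"
  shows "card {C \<in> crit_cycles L \<gamma>. \<not> contractible_in_torus C}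
       = card {C \<in> crit_cycles L \<gamma>. dual_essential L \<gamma> C}"
proof -
  have "{C \<in> crit_cycles L \<gamma>. \<not> contractible_in_torus C} = {C \<in> crit_cycles L \<gamma>. dual_essential L \<gamma> C}"
    using key[OF assms] by blast
  then show ?thesis by simp
qed

end
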